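(* Let $X$ be a Tychonoff Hausdorff $P$-space, $Y$ a Tychonoff space, $f:X\to Y$ a nearly perfect mapping, and $A\subseteq X$. Then $f|_A:A\to f(A)$ is a nearly perfect mapping onto $f(A)$ if and only if $A=f^{-1}(f(A))\cap\overline{A}$.
   Context: A space $X$ is Menger if for each sequence $(\mathcal{U}_n)$ of open covers of $X$ there is a sequence $(\mathcal{V}_n)$ with each $\mathcal{V}_n$ a finite subset of $\mathcal{U}_n$ and $\bigcup_{n}\bigcup\mathcal{V}_n=X$. A $P$-space is a space in which every countable intersection of open sets is open. A mapping $f:X\to Y$ is nearly perfect if it is a closed continuous surjection such that $f^{-1}(y)$ is Menger for every $y\in Y$. *)

theory Defs
  imports "HOL-Analysis.Analysis"
begin

definition tychonoff_space :: "'a topology \<Rightarrow> bool" where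
  "tychonoff_space X \<longleftrightarrow> completely_regular_space X \<and> t1_space X"

text \<open>P-space: every countable intersection of open sets is open
  (countable families indexed by nat, repetitions allowed).\<close>
definition p_space :: "'a topology \<Rightarrow> bool" where
  "p_space X \<longleftrightarrow> (\<forall>U :: nat \<Rightarrow> 'a set. (\<forall>n. openin X (U n)) \<longrightarrow> openin X (\<Inter>n. U n))"

definition menger_space :: "'a topology \<Rightarrow> bool" where
  "menger_space X \<longleftrightarrow>
    (\<forall>\<U> :: nat \<Rightarrow> 'a set set.
       (\<forall>n. (\<forall>U\<in>\<U> n. openin X U) \<and> topspace X \<subseteq> \<Union>(\<U> n)) \<longrightarrow>
       (\<exists>\<V> :: nat \<Rightarrow> 'a set set. (\<forall>n. finite (\<V> n) \<and> \<V> n \<subseteq> \<U> n) \<and>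
            topspace X \<subseteq> (\<Union>n. \<Union>(\<V> n))))"

definition nearly_perfect_map :: "'a topology \<Rightarrow> 'b topology \<Rightarrow> ('a \<Rightarrow> 'b) \<Rightarrow> bool" where
  "nearly_perfect_map X Y f \<longleftrightarrow>
     continuous_map X Y f \<and> closed_map X Y f \<and> f ` topspace X = topspace Y \<and>
     (\<forall>y\<in>topspace Y. menger_space (subtopology X {x \<in> topspace X. f x = y}))"

end

theory Submission
  imports Defs
begin

lemma menger_closed:
  assumes M: "menger_space X" and C: "closedin X C"
  shows "menger_space (subtopology X C)"
  unfolding menger_space_def
proof (intro allI impI)
  fix \<U> :: "nat \<Rightarrow> 'a set set"
  assume H: "\<forall>n. (\<forall>U\<in>\<U> n. openin (subtopology X C) U) \<and> topspace (subtopology X C) \<subseteq> \<Union>(\<U> n)"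
  have Ct: "C \<subseteq> topspace X" using C closedin_subset by blast
  define \<U>' where "\<U>' n = {V. openin X V \<and> C \<inter> V \<in> \<U> n} \<union> {topspace X - C}" for n
  have cov: "\<forall>n. (\<forall>U\<in>\<U>' n. openin X U) \<and> topspace X \<subseteq> \<Union>(\<U>' n)"
  proof
    fix n
    show "(\<forall>U\<in>\<U>' n. openin X U) \<and> topspace X \<subseteq> \<Union>(\<U>' n)"
    proof
      show "\<forall>U\<in>\<U>' n. openin X U" using C by (auto simp: \<U>'_def)
      show "topspace X \<subseteq> \<Union>(\<U>' n)"
      proof
        fix x assume x: "x \<in> topspace X"
        show "x \<in> \<Union>(\<U>' n)"
        proof (cases "x \<in> C")
          case True
          then have "x \<in> topspace (subtopology X C)" using x by simp
          then obtain U where U: "U \<in> \<U> n" "x \<in> U" using H by blast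
          then have "openin (subtopology X C) U" using H by blast
          then obtain V where V: "openin X V" "U = V \<inter> C" by (auto simp: openin_subtopology)
          then have "V \<in> \<U>' n" using U by (auto simp: \<U>'_def Int_commute)
          then show ?thesis using U V by blast
        next
          case False
          then show ?thesis using x by (auto simp: \<U>'_def)
        qed
      qed
    qed
  qed
  then obtain \<V>' where V': "\<forall>n. finite (\<V>' n) \<and> \<V>' n \<subseteq> \<U>' n" "topspace X \<subseteq> (\<Union>n. \<Union>(\<V>' n))"
    using M[unfolded menger_space_def, THEN spec, THEN mp, OF cov] by blast
  define \<V> where "\<V> n = (\<lambda>V. C \<inter> V) ` (\<V>' n - {topspace X - C})" for n
  show "\<exists>\<V>. (\<forall>n. finite (\<V> n) \<and> \<V> n \<subseteq> \<U> n) \<and> topspace (subtopology X C) \<subseteq> (\<Union>n. \<Union>(\<V> n))"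
  proof (intro exI conjI allI)
    fix n
    show "finite (\<V> n)" using V' by (simp add: \<V>_def)
    show "\<V> n \<subseteq> \<U> n" using V'(1) by (force simp: \<V>_def \<U>'_def)
  next
    show "topspace (subtopology X C) \<subseteq> (\<Union>n. \<Union>(\<V> n))"
    proof
      fix x assume "x \<in> topspace (subtopology X C)"
      then have x: "x \<in> C" "x \<in> topspace X" by auto
      then obtain n V where "V \<in> \<V>' n" "x \<in> V" using V'(2) by blast
      moreover have "V \<noteq> topspace X - C" using x \<open>x \<in> V\<close> by blast
      ultimately have "C \<inter> V \<in> \<V> n" by (auto simp: \<V>_def)
      then show "x \<in> (\<Union>n. \<Union>(\<V> n))" using x \<open>x \<in> V\<close> by blast
    qed
  qed
qed

lemma menger_imp_closed:
  assumes Hd: "Hausdorff_space X" and P: "p_space X" and K: "K \<subseteq> topspace X"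
    and M: "menger_space (subtopology X K)"
  shows "closedin X K"
proof -
  have "openin X (topspace X - K)"
  proof (subst openin_subopen, intro ballI)
    fix x assume x: "x \<in> topspace X - K"
    have "\<forall>k\<in>K. \<exists>UV. openin X (fst UV) \<and> openin X (snd UV) \<and> k \<in> fst UV \<and> x \<in> snd UV \<and> disjnt (fst UV) (snd UV)"
    proof
      fix k assume k: "k \<in> K"
      then have "k \<noteq> x" using x by blast
      have "k \<in> topspace X" "x \<in> topspace X" using k K x by auto
      then obtain U V where "openin X U" "openin X V" "k \<in> U" "x \<in> V" "disjnt U V"
        using Hd \<open>k \<noteq> x\<close> unfolding Hausdorff_space_def by metis
      then show "\<exists>UV. openin X (fst UV) \<and> openin X (snd UV) \<and> k \<in> fst UV \<and> x \<in> snd UV \<and> disjnt (fst UV) (snd UV)"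
        by (intro exI[of _ "(U,V)"]) auto
    qed
    then obtain g where g: "\<And>k. k \<in> K \<Longrightarrow> openin X (fst (g k)) \<and> openin X (snd (g k)) \<and> k \<in> fst (g k) \<and> x \<in> snd (g k) \<and> disjnt (fst (g k)) (snd (g k))"
      by metis
    define U where "U k = fst (g k)" for k
    define V where "V k = snd (g k)" for k
    define \<U> where "\<U> n = (\<lambda>k. K \<inter> U k) ` K" for n :: nat
    have cov: "\<forall>n. (\<forall>W\<in>\<U> n. openin (subtopology X K) W) \<and> topspace (subtopology X K) \<subseteq> \<Union>(\<U> n)"
      using g K unfolding \<U>_def U_def
      by (auto simp: openin_subtopology_Int2)
    then obtain \<V> where V1: "\<forall>n. finite (\<V> n) \<and> \<V> n \<subseteq> \<U> n"
      and V2: "topspace (subtopology X K) \<subseteq> (\<Union>n. \<Union>(\<V> n))"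
      using M[unfolded menger_space_def, THEN spec, THEN mp, OF cov] by blast
    have "\<forall>n. \<exists>Kn. Kn \<subseteq> K \<and> finite Kn \<and> \<V> n = (\<lambda>k. K \<inter> U k) ` Kn"
    proof
      fix n
      have "finite (\<V> n)" "\<V> n \<subseteq> (\<lambda>k. K \<inter> U k) ` K" using V1 unfolding \<U>_def by auto
      then show "\<exists>Kn. Kn \<subseteq> K \<and> finite Kn \<and> \<V> n = (\<lambda>k. K \<inter> U k) ` Kn"
        using finite_subset_image by blast
    qed
    then obtain KK where KK: "\<And>n. KK n \<subseteq> K \<and> finite (KK n) \<and> \<V> n = (\<lambda>k. K \<inter> U k) ` KK n"
      by metis
    define W where "W n = topspace X \<inter> (\<Inter>k\<in>KK n. V k)" for n
    have "openin X (W n)" for n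
    proof -
      have "\<forall>k\<in>KK n. openin X (V k)" using KK g unfolding V_def by blast
      then show ?thesis unfolding W_def using KK[of n] by (intro openin_Int_Inter) auto
    qed
    then have o: "openin X (\<Inter>n. W n)" using P unfolding p_space_def by blast
    have xin: "x \<in> (\<Inter>n. W n)" using x KK g unfolding W_def V_def by blast
    have "(\<Inter>n. W n) \<subseteq> topspace X - K"
    proof
      fix z assume z: "z \<in> (\<Inter>n. W n)"
      then have zt: "z \<in> topspace X" unfolding W_def by blast
      show "z \<in> topspace X - K"
      proof (rule ccontr)
        assume "z \<notin> topspace X - K"
        then have "z \<in> topspace (subtopology X K)" using zt by simp
        then obtain n S where "S \<in> \<V> n" "z \<in> S" using V2 by blast
        then obtain k where k: "k \<in> KK n" "z \<in> U k" using KK by blast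
        then have "k \<in> K" using KK by blast
        have "z \<in> V k" using z k unfolding W_def by blast
        then show False using g[OF \<open>k \<in> K\<close>] k unfolding U_def V_def disjnt_def by blast
      qed
    qed
    then show "\<exists>T. openin X T \<and> x \<in> T \<and> T \<subseteq> topspace X - K" using o xin by blast
  qed
  then show ?thesis using K by (simp add: closedin_def)
qed

theorem theorem5p21:
  fixes X :: "'a topology" and Y :: "'b topology" and f :: "'a \<Rightarrow> 'b" and A :: "'a set"
  assumes "tychonoff_space X" and "Hausdorff_space X" and "p_space X"
    and "tychonoff_space Y"
    and "nearly_perfect_map X Y f"
    and "A \<subseteq> topspace X"
  shows "nearly_perfect_map (subtopology X A) (subtopology Y (f ` A)) f \<longleftrightarrow>
         A = {x \<in> topspace X. f x \<in> f ` A} \<inter> X closure_of A"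
proof -
  have cont: "continuous_map X Y f" and clm: "closed_map X Y f"
    and fib: "\<And>y. y \<in> topspace Y \<Longrightarrow> menger_space (subtopology X {x \<in> topspace X. f x = y})"
    using assms(5) unfolding nearly_perfect_map_def by auto
  have At: "A \<subseteq> topspace X" by (rule assms(6))
  have fAY: "f ` A \<subseteq> topspace Y" using cont At continuous_map_image_subset_topspace by fastforce
  have Acl: "A \<subseteq> X closure_of A" using At closure_of_subset by blast
  show ?thesis
  proof
    assume N: "nearly_perfect_map (subtopology X A) (subtopology Y (f ` A)) f"
    have clA: "closed_map (subtopology X A) (subtopology Y (f ` A)) f"
      and fibA: "\<And>y. y \<in> topspace (subtopology Y (f ` A)) \<Longrightarrow>
         menger_space (subtopology (subtopology X A) {x \<in> topspace (subtopology X A). f x = y})"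
      using N unfolding nearly_perfect_map_def by auto
    have reg: "regular_space X"
      using assms(1) completely_regular_imp_regular_space unfolding tychonoff_space_def by blast
    have "{x \<in> topspace X. f x \<in> f ` A} \<inter> X closure_of A \<subseteq> A"
    proof
      fix x assume xx: "x \<in> {x \<in> topspace X. f x \<in> f ` A} \<inter> X closure_of A"
      then have xt: "x \<in> topspace X" and xfA: "f x \<in> f ` A" and xcl: "x \<in> X closure_of A" by auto
      show "x \<in> A"
      proof (rule ccontr)
        assume xA: "x \<notin> A"
        define y where "y = f x"
        define F where "F = {z \<in> A. f z = y}"
        have yY: "y \<in> topspace (subtopology Y (f ` A))" using xfA fAY unfolding y_def by auto
        have "subtopology (subtopology X A) {z \<in> topspace (subtopology X A). f z = y} = subtopology X F"
        proof -
          have "A \<inter> {z \<in> topspace (subtopology X A). f z = y} = F" using At unfolding F_def by auto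
          then show ?thesis by (simp add: subtopology_subtopology)
        qed
        then have MF: "menger_space (subtopology X F)" using fibA[OF yY] by simp
        have "F \<subseteq> topspace X" using At unfolding F_def by auto
        then have Fc: "closedin X F"
          using menger_imp_closed[OF assms(2) assms(3) _ MF] by blast
        have "x \<in> topspace X - F" using xt xA unfolding F_def by auto
        then obtain U V where UV: "openin X U" "openin X V" "x \<in> U" "F \<subseteq> V" "disjnt U V"
          using reg Fc unfolding regular_space_def by metis
        define C where "C = A - V"
        have "closedin (subtopology X A) C"
          unfolding closedin_subtopology C_def
          by (rule exI[of _ "topspace X - V"]) (use UV At in auto)
        then have "closedin (subtopology Y (f ` A)) (f ` C)" using clA unfolding closed_map_def by blast
        then obtain D where D: "closedin Y D" "f ` C = D \<inter> f ` A" unfolding closedin_subtopology by blast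
        have yC: "y \<notin> f ` C" using UV(4) unfolding C_def F_def by auto
        have yD: "y \<notin> D" using yC D xfA unfolding y_def by auto
        define Ob where "Ob = {z \<in> topspace X. f z \<in> topspace Y - D} \<inter> U"
        have "openin Y (topspace Y - D)" using D(1) by blast
        then have "openin X {z \<in> topspace X. f z \<in> topspace Y - D}"
          by (rule openin_continuous_map_preimage[OF cont])
        then have "openin X Ob" unfolding Ob_def using UV(1) by (rule openin_Int)
        moreover have "f x \<in> topspace Y" using continuous_map_image_subset_topspace[OF cont] xt by blast
        then have "x \<in> Ob" unfolding Ob_def using xt UV(3) yD unfolding y_def by blast
        ultimately obtain a where a: "a \<in> A" "a \<in> Ob" using xcl unfolding in_closure_of by blast
        then have "a \<notin> V" using UV(5) unfolding Ob_def disjnt_def by blast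
        then have "a \<in> C" using a unfolding C_def by blast
        then have "f a \<in> D" using D by blast
        then show False using a unfolding Ob_def by blast
      qed
    qed
    then show "A = {x \<in> topspace X. f x \<in> f ` A} \<inter> X closure_of A" using Acl At by blast
  next
    assume E: "A = {x \<in> topspace X. f x \<in> f ` A} \<inter> X closure_of A"
    have c1: "continuous_map (subtopology X A) (subtopology Y (f ` A)) f"
      using cont by (simp add: continuous_map_from_subtopology continuous_map_in_subtopology image_mono)
    have c2: "closed_map (subtopology X A) (subtopology Y (f ` A)) f"
      unfolding closed_map_def
    proof (intro allI impI)
      fix C assume "closedin (subtopology X A) C"
      then obtain D where D: "closedin X D" "C = D \<inter> A" unfolding closedin_subtopology by blast
      have CA: "C \<subseteq> A" using D by blast
      have "C \<subseteq> D" using D(2) by blast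
      then have clC: "X closure_of C \<subseteq> D" using D(1) by (rule closure_of_minimal)
      have "C \<subseteq> topspace X" using CA At by blast
      then have "C \<subseteq> X closure_of C" by (rule closure_of_subset)
      then have Ceq: "C = A \<inter> X closure_of C" using D(2) clC CA by blast
      have "closedin X (X closure_of C)" by (rule closedin_closure_of)
      then have "closedin Y (f ` (X closure_of C))" using clm unfolding closed_map_def by blast
      moreover have "f ` C = f ` (X closure_of C) \<inter> f ` A"
      proof
        show "f ` C \<subseteq> f ` (X closure_of C) \<inter> f ` A" using CA Ceq by blast
        show "f ` (X closure_of C) \<inter> f ` A \<subseteq> f ` C"
        proof
          fix y assume "y \<in> f ` (X closure_of C) \<inter> f ` A"
          then obtain z where z: "z \<in> X closure_of C" "f z \<in> f ` A" "y = f z" by blast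
          have "z \<in> X closure_of A" using z(1) closure_of_mono[OF CA] by blast
          moreover have "z \<in> topspace X" using closure_of_subset_topspace[of X C] z(1) by blast
          ultimately have "z \<in> {x \<in> topspace X. f x \<in> f ` A} \<inter> X closure_of A" using z(2) by blast
          then have "z \<in> A" by (subst E)
          then have "z \<in> C" using Ceq z(1) by blast
          then show "y \<in> f ` C" using z(3) by blast
        qed
      qed
      ultimately show "closedin (subtopology Y (f ` A)) (f ` C)"
        unfolding closedin_subtopology by blast
    qed
    have c3: "f ` topspace (subtopology X A) = topspace (subtopology Y (f ` A))"
      using At fAY by auto
    have c4: "menger_space (subtopology (subtopology X A) {x \<in> topspace (subtopology X A). f x = y})"
      if yY: "y \<in> topspace (subtopology Y (f ` A))" for y
    proof -
      define Fy where "Fy = {x \<in> topspace X. f x = y}"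
      have yfA: "y \<in> f ` A" and yT: "y \<in> topspace Y" using yY by auto
      have M: "menger_space (subtopology X Fy)" using fib[OF yT] unfolding Fy_def .
      have "closedin (subtopology X Fy) (Fy \<inter> X closure_of A)"
        unfolding closedin_subtopology by (rule exI[of _ "X closure_of A"]) auto
      then have M2: "menger_space (subtopology (subtopology X Fy) (Fy \<inter> X closure_of A))"
        using menger_closed[OF M] by blast
      have eqS: "Fy \<inter> (Fy \<inter> X closure_of A) = A \<inter> {x \<in> topspace (subtopology X A). f x = y}"
      proof -
        have "Fy \<inter> X closure_of A \<subseteq> A"
        proof
          fix z assume "z \<in> Fy \<inter> X closure_of A"
          then have "z \<in> {x \<in> topspace X. f x \<in> f ` A} \<inter> X closure_of A"
            using yfA unfolding Fy_def by auto
          then show "z \<in> A" by (subst E)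
        qed
        then show ?thesis using At Acl unfolding Fy_def by auto
      qed
      have "subtopology (subtopology X Fy) (Fy \<inter> X closure_of A) =
            subtopology (subtopology X A) {x \<in> topspace (subtopology X A). f x = y}"
        unfolding subtopology_subtopology using eqS by (rule arg_cong)
      then show ?thesis using M2 by (simp only:)
    qed
    show "nearly_perfect_map (subtopology X A) (subtopology Y (f ` A)) f"
      unfolding nearly_perfect_map_def using c1 c2 c3 c4 by blast
  qed
qed

end
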